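(* For all integers $n,m\ge1$, $$\beta(n)\beta(m)=\sum_{d\mid\gcd(n,m)}\beta(nm/d^2)\,d\,\lambda(d),\qquad \beta(nm)=\sum_{d\mid\gcd(n,m)}\beta(n/d)\beta(m/d)\,d\,\mu^2(d).$$ Consequently $\beta(nm)\ge\beta(n)\beta(m)$ for all $n,m\ge1$.
   Context: $\lambda$ is the Liouville function, $\mu$ the Möbius function, and $\beta(n)=\sum_{d\mid n}d\,\lambda(n/d)$. *)

theory Defs
  imports "HOL-Computational_Algebra.Computational_Algebra"
begin

definition liouville :: "nat \<Rightarrow> int" where
  "liouville n = (-1) ^ size (prime_factorization n)"

definition moebius :: "nat \<Rightarrow> int" where
  "moebius n = (if squarefree n then (-1) ^ card (prime_factors n) else 0)"

definition beta :: "nat \<Rightarrow> int" where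
  "beta n = (\<Sum>d | d dvd n. int d * liouville (n div d))"

end

theory Submission
  imports Defs
begin

lemma gcd_dvd_prod:
  fixes a b x y :: nat
  assumes "coprime a b" "x dvd a" "y dvd b"
  shows "gcd (x*y) a = x"
  by (metis assms(1,2,3) coprime_divisors gcd_mult_left_right_cancel
    gcd_nat.orderE gcd_nat.order_iff_strict)

lemma dvd_prod_decomp:
  fixes a b d :: nat
  assumes "coprime a b" "d dvd a*b"
  shows "gcd d a * gcd d b = d"
proof -
  obtain x y where xy: "d = x*y" "x dvd a" "y dvd b" using assms(2) by (rule dvd_productE)
  have "gcd d a = x" using gcd_dvd_prod[OF assms(1) xy(2,3)] xy(1) by simp
  moreover have "gcd d b = y" using gcd_dvd_prod[of b a y x] assms(1) xy
    by (simp add: coprime_commute mult.commute)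
  ultimately show ?thesis using xy(1) by simp
qed

lemma divsum_coprime:
  fixes a b :: nat and F :: "nat \<Rightarrow> 'c::comm_monoid_add"
  assumes "coprime a b"
  shows "(\<Sum>d | d dvd a*b. F d) = (\<Sum>x | x dvd a. \<Sum>y | y dvd b. F (x*y))"
proof -
  have "(\<Sum>d | d dvd a*b. F d) = (\<Sum>(x,y)\<in>{x. x dvd a} \<times> {y. y dvd b}. F (x*y))"
  proof (rule sum.reindex_bij_witness[where i="\<lambda>(x,y). x*y" and j="\<lambda>d. (gcd d a, gcd d b)"])
    fix d assume "d \<in> {d. d dvd a*b}"
    then show "(case (gcd d a, gcd d b) of (x, y) \<Rightarrow> x * y) = d"
      using dvd_prod_decomp[OF assms] by simp
  next
    fix d assume "d \<in> {d. d dvd a*b}"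
    then show "(gcd d a, gcd d b) \<in> {x. x dvd a} \<times> {y. y dvd b}" by simp
  next
    fix p assume p: "p \<in> {x. x dvd a} \<times> {y. y dvd b}"
    obtain x y where "p = (x,y)" by (cases p)
    with p have xy: "p = (x,y)" "x dvd a" "y dvd b" by auto
    have "gcd (x*y) a = x" using gcd_dvd_prod[OF assms xy(2,3)] .
    moreover have "gcd (x*y) b = y" using gcd_dvd_prod[of b a y x] assms xy
      by (simp add: coprime_commute mult.commute)
    ultimately show "(gcd (case p of (x, y) \<Rightarrow> x * y) a, gcd (case p of (x, y) \<Rightarrow> x * y) b) = p"
      using xy by simp
  next
    fix p assume p: "p \<in> {x. x dvd a} \<times> {y. y dvd b}"
    then show "(case p of (x, y) \<Rightarrow> x * y) \<in> {d. d dvd a * b}" by (auto intro: mult_dvd_mono)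
  next
    fix d assume "d \<in> {d. d dvd a*b}"
    then show "(case (gcd d a, gcd d b) of (x, y) \<Rightarrow> F (x * y)) = F d"
      using dvd_prod_decomp[OF assms] by simp
  qed
  also have "\<dots> = (\<Sum>x | x dvd a. \<Sum>y | y dvd b. F (x*y))"
    by (rule sum.cartesian_product[symmetric])
  finally show ?thesis .
qed

lemma liouville_mult: "x \<noteq> 0 \<Longrightarrow> y \<noteq> 0 \<Longrightarrow> liouville (x*y) = liouville x * liouville y"
  by (simp add: liouville_def prime_factorization_mult power_add)

lemma liouville_pp: "prime p \<Longrightarrow> liouville (p^k) = (-1)^k"
  by (simp add: liouville_def prime_factorization_prime_power)

lemma beta_0: "beta 0 = 0"
  by (simp add: beta_def)

lemma beta_1: "beta 1 = 1"
  by (simp add: beta_def liouville_def)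

lemma beta_mult:
  assumes "coprime a b"
  shows "beta (a*b) = beta a * beta b"
proof (cases "a = 0 \<or> b = 0")
  case True then show ?thesis by (auto simp: beta_0)
next
  case False
  have "beta (a*b) = (\<Sum>x | x dvd a. \<Sum>y | y dvd b. int (x*y) * liouville (a*b div (x*y)))"
    unfolding beta_def by (rule divsum_coprime[OF assms])
  also have "\<dots> = (\<Sum>x | x dvd a. \<Sum>y | y dvd b. (int x * liouville (a div x)) * (int y * liouville (b div y)))"
  proof (intro sum.cong refl)
    fix x y assume x: "x \<in> {x. x dvd a}" and y: "y \<in> {y. y dvd b}"
    have e: "a*b div (x*y) = (a div x) * (b div y)"
      using x y by (simp add: div_mult_div_if_dvd)
    have "a div x \<noteq> 0" "b div y \<noteq> 0" using x y False by (auto elim!: dvdE)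
    then show "int (x*y) * liouville (a*b div (x*y)) = (int x * liouville (a div x)) * (int y * liouville (b div y))"
      by (simp add: e liouville_mult)
  qed
  also have "\<dots> = beta a * beta b"
    unfolding beta_def by (simp add: sum_product)
  finally show ?thesis .
qed

lemma divsum_pp:
  fixes F :: "nat \<Rightarrow> 'c::comm_monoid_add"
  assumes "prime p"
  shows "(\<Sum>d | d dvd p^c. F d) = (\<Sum>j\<le>c. F (p^j))"
proof -
  have "{d. d dvd p^c} = (\<lambda>j. p^j) ` {..c}"
    using divides_primepow_nat[OF assms] by auto
  moreover have "inj_on (\<lambda>j. p^j) {..c}"
    using prime_gt_1_nat[OF assms] by (auto intro: inj_onI simp: power_inject_exp)
  ultimately show ?thesis by (simp add: sum.reindex)
qed

lemma gcd_pp: "gcd ((p::nat)^a) (p^b) = p^(min a b)"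
  by (cases "a \<le> b") (auto simp: min_def le_imp_power_dvd gcd_nat.absorb1 gcd_nat.absorb2)

lemma beta_pp:
  assumes "prime p"
  shows "beta (p^k) = (\<Sum>j\<le>k. int p ^ j * (-1)^(k-j))"
proof -
  have "beta (p^k) = (\<Sum>j\<le>k. int (p^j) * liouville (p^k div p^j))"
    unfolding beta_def by (rule divsum_pp[OF assms])
  also have "\<dots> = (\<Sum>j\<le>k. int p ^ j * (-1)^(k-j))"
  proof (intro sum.cong refl)
    fix j assume "j \<in> {..k}"
    then have "p^k div p^j = p^(k-j)" using assms by (simp add: power_diff prime_gt_0_nat)
    then show "int (p^j) * liouville (p^k div p^j) = int p ^ j * (-1)^(k-j)"
      using assms by (simp add: liouville_pp)
  qed
  finally show ?thesis .
qed

lemma beta_closed: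
  assumes "prime p"
  shows "(int p + 1) * beta (p^k) = int p ^ (k+1) + (-1)^k"
proof (induction k)
  case 0 then show ?case using beta_1 by simp
next
  case (Suc k)
  have "beta (p^Suc k) = (\<Sum>j\<le>Suc k. int p ^ j * (-1)^(Suc k-j))"
    by (rule beta_pp[OF assms])
  also have "\<dots> = int p ^ Suc k + (\<Sum>j\<le>k. int p ^ j * (-1)^(Suc k-j))"
    by (simp add: sum.atMost_Suc)
  also have "(\<Sum>j\<le>k. int p ^ j * (-1)^(Suc k-j)) = - (\<Sum>j\<le>k. int p ^ j * (-1)^(k-j))"
    by (subst sum_negf[symmetric], intro sum.cong refl) (simp add: Suc_diff_le)
  also have "(\<Sum>j\<le>k. int p ^ j * (-1)^(k-j)) = beta (p^k)" using beta_pp[OF assms] by simp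
  finally have "beta (p^Suc k) = int p ^ Suc k - beta (p^k)" by simp
  then have "(int p+1)*beta(p^Suc k) = (int p+1)*int p^Suc k - (int p+1)*beta(p^k)"
    by (simp add: right_diff_distrib)
  also have "\<dots> = (int p+1)*int p^Suc k - (int p ^ (k+1) + (-1)^k)" using Suc.IH by simp
  finally show ?case by (simp add: algebra_simps)
qed

lemma beta_rec:
  assumes "prime p"
  shows "beta (p^(a+1)) * beta (p^(b+1)) = beta (p^(a+b+2)) - int p * beta (p^a) * beta (p^b)"
proof -
  define q where "q = int p"
  have q: "q + 1 \<noteq> 0" using prime_gt_0_nat[OF assms] by (simp add: q_def)
  have C: "\<And>k. (q+1) * beta (p^k) = q^(k+1) + (-1)^k" using beta_closed[OF assms] by (simp add: q_def)
  have "(q+1)^2 * (beta (p^(a+1)) * beta (p^(b+1))) = ((q+1) * beta (p^(a+1))) * ((q+1) * beta (p^(b+1)))"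
    by (simp add: algebra_simps power2_eq_square)
  also have "\<dots> = (q^(a+1+1) + (-1)^(a+1)) * (q^(b+1+1) + (-1)^(b+1))" by (simp only: C)
  also have "\<dots> = (q+1) * (q^(a+b+2+1) + (-1)^(a+b+2)) - q * ((q^(a+1) + (-1)^a) * (q^(b+1) + (-1)^b))"
    by (simp add: algebra_simps power_add)
  also have "\<dots> = (q+1) * ((q+1) * beta (p^(a+b+2))) - q * (((q+1) * beta (p^a)) * ((q+1) * beta (p^b)))"
    by (simp only: C)
  also have "\<dots> = (q+1)^2 * (beta (p^(a+b+2)) - q * beta (p^a) * beta (p^b))"
    by (simp add: algebra_simps power2_eq_square)
  finally show ?thesis using q by (simp add: q_def)
qed

lemma pp1_aux:
  assumes "prime p"
  shows "min a b = c \<Longrightarrow> beta (p^a) * beta (p^b) = (\<Sum>j\<le>c. beta (p^(a+b-2*j)) * (- int p)^j)"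
proof (induction c arbitrary: a b)
  case 0
  then have "a = 0 \<or> b = 0" by auto
  then show ?case using beta_1 by auto
next
  case (Suc c)
  then obtain a' b' where ab: "a = Suc a'" "b = Suc b'" "min a' b' = c"
    by (cases a; cases b) auto
  have "(\<Sum>j\<le>Suc c. beta (p^(a+b-2*j)) * (- int p)^j)
     = beta (p^(a+b)) + (\<Sum>j\<le>c. beta (p^(a+b-2*Suc j)) * (- int p)^Suc j)"
    by (subst sum.atMost_Suc_shift) simp
  also have "(\<Sum>j\<le>c. beta (p^(a+b-2*Suc j)) * (- int p)^Suc j)
     = - int p * (\<Sum>j\<le>c. beta (p^(a'+b'-2*j)) * (- int p)^j)"
    by (simp add: sum_distrib_left ab algebra_simps)
  also have "(\<Sum>j\<le>c. beta (p^(a'+b'-2*j)) * (- int p)^j) = beta (p^a') * beta (p^b')"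
    using Suc.IH[OF ab(3)] by simp
  finally have "(\<Sum>j\<le>Suc c. beta (p^(a+b-2*j)) * (- int p)^j)
     = beta (p^(a'+b'+2)) - int p * beta (p^a') * beta (p^b')" using ab by simp
  also have "\<dots> = beta (p^(a'+1)) * beta (p^(b'+1))" using beta_rec[OF assms] by simp
  finally show ?case using ab by simp
qed

lemma moebius_sq: "(moebius d)^2 = (if squarefree d then 1 else 0)"
  by (simp add: moebius_def power_even_eq[symmetric] flip: power_mult)

lemma moebius_sq_pp: "prime p \<Longrightarrow> (moebius (p^j))^2 = (if j \<le> 1 then 1 else 0)"
  by (auto simp: moebius_sq squarefree_power_iff squarefree_prime)

lemma pp2:
  assumes "prime p"
  shows "beta (p^(a+b)) = (\<Sum>j\<le>min a b. beta (p^a div p^j) * beta (p^b div p^j) * int (p^j) * (moebius (p^j))^2)"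
proof (cases "min a b = 0")
  case True
  then have "a = 0 \<or> b = 0" by auto
  then show ?thesis using True beta_1 by (auto simp: moebius_sq)
next
  case False
  then obtain a' b' where ab: "a = Suc a'" "b = Suc b'" by (cases a; cases b) auto
  have p0: "p \<noteq> 0" using assms by auto
  let ?f = "\<lambda>j. beta (p^a div p^j) * beta (p^b div p^j) * int (p^j) * (moebius (p^j))^2"
  have "(\<Sum>j\<le>min a b. ?f j) = (\<Sum>j\<in>{0,1}. ?f j)"
    by (rule sum.mono_neutral_right) (use False in \<open>auto simp: moebius_sq_pp[OF assms]\<close>)
  also have "\<dots> = beta (p^a) * beta (p^b) + int p * beta (p^a') * beta (p^b')"
    using p0 ab assms by (simp add: moebius_sq_pp[OF assms] moebius_sq squarefree_prime)
  also have "beta (p^a) * beta (p^b) = beta (p^(a'+b'+2)) - int p * beta (p^a') * beta (p^b')"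
    using beta_rec[OF assms, of a' b'] ab by simp
  finally show ?thesis using ab by simp
qed

lemma ind2:
  fixes P :: "nat \<Rightarrow> nat \<Rightarrow> bool" and n m :: nat
  assumes mult: "\<And>n1 m1 n2 m2. coprime (n1*m1) (n2*m2) \<Longrightarrow> n1 > 0 \<Longrightarrow> m1 > 0 \<Longrightarrow> n2 > 0 \<Longrightarrow> m2 > 0
                  \<Longrightarrow> P n1 m1 \<Longrightarrow> P n2 m2 \<Longrightarrow> P (n1*n2) (m1*m2)"
    and pp: "\<And>p a b. prime p \<Longrightarrow> P (p^a) (p^b)"
  shows "n > 0 \<Longrightarrow> m > 0 \<Longrightarrow> P n m"
proof (induction "n*m" arbitrary: n m rule: less_induct)
  case less
  show ?case
  proof (cases "n*m = 1")
    case True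
    then have "n = 1" "m = 1" by auto
    then show ?thesis using pp[of 2 0 0] by simp
  next
    case False
    then obtain p where p: "prime p" "p dvd n*m" using prime_factor_nat by blast
    obtain n' where n': "n = p^multiplicity p n * n'" "\<not> p dvd n'"
      using multiplicity_decompose'[of n p] less.prems p(1) prime_gt_1_nat[OF p(1)] by (auto simp: not_prime_unit)
    obtain m' where m': "m = p^multiplicity p m * m'" "\<not> p dvd m'"
      using multiplicity_decompose'[of m p] less.prems p(1) prime_gt_1_nat[OF p(1)] by (auto simp: not_prime_unit)
    define a where "a = multiplicity p n"
    define b where "b = multiplicity p m"
    have na: "n = p^a * n'" and mb: "m = p^b * m'" using n' m' by (simp_all add: a_def b_def)
    have pos: "n' > 0" "m' > 0" using less.prems na mb by (auto intro!: Nat.gr0I)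
    have "\<not> p dvd n'*m'" using n'(2) m'(2) p(1) by (simp add: prime_dvd_mult_iff)
    then have cp: "coprime p (n'*m')" using p(1) by (rule prime_imp_coprime[rotated])
    then have cop: "coprime (p^a * p^b) (n'*m')" by (simp add: power_add[symmetric])
    have "a + b \<noteq> 0"
    proof
      assume "a + b = 0"
      then have "n*m = n'*m'" using na mb by simp
      with p(2) \<open>\<not> p dvd n'*m'\<close> show False by simp
    qed
    then have "p^(a+b) > 1" using prime_gt_1_nat[OF p(1)] one_less_power[of p "a+b"] by linarith
    then have "n'*m' < n*m" using na mb pos by (simp add: power_add)
    then have "P n' m'" using less.hyps pos by simp
    moreover have "P (p^a) (p^b)" using pp p(1) by simp
    ultimately have "P (p^a * n') (p^b * m')"
      using mult[OF cop] pos p(1) by (simp add: prime_gt_0_nat)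
    then show ?thesis using na mb by simp
  qed
qed

lemma gcd_split:
  fixes a b d :: nat
  assumes "coprime a b"
  shows "gcd d (a*b) = gcd d a * gcd d b"
proof -
  have "gcd (gcd d (a*b)) a * gcd (gcd d (a*b)) b = gcd d (a*b)"
    using dvd_prod_decomp[OF assms, of "gcd d (a*b)"] by simp
  moreover have "gcd (gcd d (a*b)) a = gcd d a"
    by (metis gcd.assoc gcd.commute gcd_nat.absorb_iff1 dvd_triv_left)
  moreover have "gcd (gcd d (a*b)) b = gcd d b"
    by (metis gcd.assoc gcd.commute gcd_nat.absorb_iff1 dvd_triv_right)
  ultimately show ?thesis by simp
qed

lemma gcd_mult_coprime:
  fixes n1 n2 m1 m2 :: nat
  assumes "coprime (n1*m1) (n2*m2)"
  shows "gcd (n1*n2) (m1*m2) = gcd n1 m1 * gcd n2 m2"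
proof -
  have c: "coprime n1 n2" "coprime m1 m2" "coprime n1 m2" "coprime n2 m1"
    using assms by (auto simp: coprime_commute)
  have "gcd (n1*n2) (m1*m2) = gcd (m1*m2) n1 * gcd (m1*m2) n2"
    by (subst gcd.commute) (rule gcd_split[OF c(1)])
  also have "gcd (m1*m2) n1 = gcd n1 m1 * gcd n1 m2"
    by (subst gcd.commute) (rule gcd_split[OF c(2)])
  also have "gcd (m1*m2) n2 = gcd n2 m1 * gcd n2 m2"
    by (subst gcd.commute) (rule gcd_split[OF c(2)])
  finally show ?thesis using c by simp
qed

lemma coprime_divs:
  fixes a b x y :: nat
  assumes "coprime a b" "x dvd a" "y dvd b"
  shows "coprime (a div x) (b div y)"
proof -
  have "(a div x) dvd a" "(b div y) dvd b" using assms
    by (auto intro: dvd_div_mult_self[THEN subst] simp: div_dvd_div dvd_def)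
  then show ?thesis using assms(1) by (rule coprime_divisors)
qed

lemma id1:
  fixes n m :: nat
  assumes "n > 0" "m > 0"
  shows "beta n * beta m = (\<Sum>d | d dvd gcd n m. beta (n * m div d^2) * int d * liouville d)"
proof (rule ind2[OF _ _ assms])
  fix n1 m1 n2 m2 :: nat
  assume h: "coprime (n1*m1) (n2*m2)" "n1 > 0" "m1 > 0" "n2 > 0" "m2 > 0"
    and IH: "beta n1 * beta m1 = (\<Sum>d | d dvd gcd n1 m1. beta (n1 * m1 div d^2) * int d * liouville d)"
            "beta n2 * beta m2 = (\<Sum>d | d dvd gcd n2 m2. beta (n2 * m2 div d^2) * int d * liouville d)"
  define g1 where "g1 = gcd n1 m1"
  define g2 where "g2 = gcd n2 m2"
  have cg: "coprime g1 g2" unfolding g1_def g2_def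
    by (rule coprime_divisors[OF _ _ h(1)]) (meson dvd_mult2 gcd_dvd1)+
  have c12: "coprime n1 n2" "coprime m1 m2" using h(1) by auto
  have "(\<Sum>d | d dvd gcd (n1*n2) (m1*m2). beta (n1*n2 * (m1*m2) div d^2) * int d * liouville d)
     = (\<Sum>x | x dvd g1. \<Sum>y | y dvd g2. beta (n1*n2 * (m1*m2) div (x*y)^2) * int (x*y) * liouville (x*y))"
    unfolding g1_def g2_def gcd_mult_coprime[OF h(1)] by (rule divsum_coprime[OF cg[unfolded g1_def g2_def]])
  also have "\<dots> = (\<Sum>x | x dvd g1. \<Sum>y | y dvd g2. (beta (n1 * m1 div x^2) * int x * liouville x) * (beta (n2 * m2 div y^2) * int y * liouville y))"
  proof (intro sum.cong refl)
    fix x y assume x: "x \<in> {x. x dvd g1}" and y: "y \<in> {y. y dvd g2}"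
    have x2: "x^2 dvd n1*m1" using x unfolding g1_def power2_eq_square by (auto intro: mult_dvd_mono)
    have y2: "y^2 dvd n2*m2" using y unfolding g2_def power2_eq_square by (auto intro: mult_dvd_mono)
    have e: "n1*n2 * (m1*m2) div (x*y)^2 = (n1*m1 div x^2) * (n2*m2 div y^2)"
    proof -
      have "n1*n2 * (m1*m2) div (x*y)^2 = (n1*m1)*(n2*m2) div (x^2*y^2)"
        by (simp only: power_mult_distrib ac_simps)
      also have "\<dots> = (n1*m1 div x^2) * (n2*m2 div y^2)"
        by (rule div_mult_div_if_dvd[OF x2 y2, symmetric])
      finally show ?thesis .
    qed
    have cq: "coprime (n1*m1 div x^2) (n2*m2 div y^2)" using coprime_divs[OF h(1) x2 y2] .
    have "x \<noteq> 0" "y \<noteq> 0" using x y h(2-5) unfolding g1_def g2_def by auto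
    then show "beta (n1*n2 * (m1*m2) div (x*y)^2) * int (x*y) * liouville (x*y)
       = (beta (n1 * m1 div x^2) * int x * liouville x) * (beta (n2 * m2 div y^2) * int y * liouville y)"
      by (simp add: e beta_mult[OF cq] liouville_mult)
  qed
  also have "\<dots> = (\<Sum>x | x dvd g1. beta (n1 * m1 div x^2) * int x * liouville x) * (\<Sum>y | y dvd g2. beta (n2 * m2 div y^2) * int y * liouville y)"
    by (simp add: sum_product)
  also have "\<dots> = (beta n1 * beta m1) * (beta n2 * beta m2)" using IH by (simp add: g1_def g2_def)
  also have "\<dots> = beta (n1*n2) * beta (m1*m2)" by (simp add: beta_mult[OF c12(1)] beta_mult[OF c12(2)])
  finally show "beta (n1*n2) * beta (m1*m2) = (\<Sum>d | d dvd gcd (n1*n2) (m1*m2). beta (n1*n2 * (m1*m2) div d^2) * int d * liouville d)"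
    by simp
next
  fix p a b :: nat assume pr: "prime p"
  have "(\<Sum>d | d dvd gcd (p^a) (p^b). beta (p^a * p^b div d^2) * int d * liouville d)
      = (\<Sum>j\<le>min a b. beta (p^a * p^b div (p^j)^2) * int (p^j) * liouville (p^j))"
    unfolding gcd_pp by (rule divsum_pp[OF pr])
  also have "\<dots> = (\<Sum>j\<le>min a b. beta (p^(a+b-2*j)) * (- int p)^j)"
  proof (intro sum.cong refl)
    fix j assume "j \<in> {..min a b}"
    then have "2*j \<le> a+b" by auto
    have p0: "p \<noteq> 0" using pr by auto
    have "p^a * p^b div (p^j)^2 = p^(a+b) div p^(2*j)"
      by (simp only: power_add power_mult mult.commute[of 2 j])
    also have "\<dots> = p^(a+b-2*j)" using \<open>2*j \<le> a+b\<close> p0 by (simp add: power_diff)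
    finally have e: "p^a * p^b div (p^j)^2 = p^(a+b-2*j)" .
    have l: "int (p^j) * liouville (p^j) = (- int p)^j"
      unfolding liouville_pp[OF pr] power_minus[of "int p"] by simp
    show "beta (p^a * p^b div (p^j)^2) * int (p^j) * liouville (p^j) = beta (p^(a+b-2*j)) * (- int p)^j"
      unfolding e mult.assoc l ..
  qed
  also have "\<dots> = beta (p^a) * beta (p^b)" using pp1_aux[OF pr] by simp
  finally show "beta (p^a) * beta (p^b) = (\<Sum>d | d dvd gcd (p^a) (p^b). beta (p^a * p^b div d^2) * int d * liouville d)"
    by simp
qed

lemma moebius_sq_mult:
  assumes "coprime x y"
  shows "(moebius (x*y))^2 = (moebius x)^2 * (moebius y)^2"
  using squarefree_mult_coprime[OF assms] squarefree_multD[of x y]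
  by (auto simp: moebius_sq)

lemma id2:
  fixes n m :: nat
  assumes "n > 0" "m > 0"
  shows "beta (n * m) = (\<Sum>d | d dvd gcd n m. beta (n div d) * beta (m div d) * int d * (moebius d)^2)"
proof (rule ind2[OF _ _ assms])
  fix n1 m1 n2 m2 :: nat
  assume h: "coprime (n1*m1) (n2*m2)" "n1 > 0" "m1 > 0" "n2 > 0" "m2 > 0"
    and IH: "beta (n1 * m1) = (\<Sum>d | d dvd gcd n1 m1. beta (n1 div d) * beta (m1 div d) * int d * (moebius d)^2)"
            "beta (n2 * m2) = (\<Sum>d | d dvd gcd n2 m2. beta (n2 div d) * beta (m2 div d) * int d * (moebius d)^2)"
  define g1 where "g1 = gcd n1 m1"
  define g2 where "g2 = gcd n2 m2"
  have cg: "coprime g1 g2" unfolding g1_def g2_def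
    by (rule coprime_divisors[OF _ _ h(1)]) (meson dvd_mult2 gcd_dvd1)+
  have c12: "coprime n1 n2" "coprime m1 m2" using h(1) by auto
  have "(\<Sum>d | d dvd gcd (n1*n2) (m1*m2). beta (n1*n2 div d) * beta (m1*m2 div d) * int d * (moebius d)^2)
     = (\<Sum>x | x dvd g1. \<Sum>y | y dvd g2. beta (n1*n2 div (x*y)) * beta (m1*m2 div (x*y)) * int (x*y) * (moebius (x*y))^2)"
    unfolding g1_def g2_def gcd_mult_coprime[OF h(1)] by (rule divsum_coprime[OF cg[unfolded g1_def g2_def]])
  also have "\<dots> = (\<Sum>x | x dvd g1. \<Sum>y | y dvd g2. (beta (n1 div x) * beta (m1 div x) * int x * (moebius x)^2) * (beta (n2 div y) * beta (m2 div y) * int y * (moebius y)^2))"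
  proof (intro sum.cong refl)
    fix x y assume x: "x \<in> {x. x dvd g1}" and y: "y \<in> {y. y dvd g2}"
    have xd: "x dvd n1" "x dvd m1" using x unfolding g1_def by auto
    have yd: "y dvd n2" "y dvd m2" using y unfolding g2_def by auto
    have e1: "n1*n2 div (x*y) = (n1 div x) * (n2 div y)"
      by (rule div_mult_div_if_dvd[OF xd(1) yd(1), symmetric])
    have e2: "m1*m2 div (x*y) = (m1 div x) * (m2 div y)"
      by (rule div_mult_div_if_dvd[OF xd(2) yd(2), symmetric])
    have cn: "coprime (n1 div x) (n2 div y)" using coprime_divs[OF c12(1) xd(1) yd(1)] .
    have cm: "coprime (m1 div x) (m2 div y)" using coprime_divs[OF c12(2) xd(2) yd(2)] .
    have cxy: "coprime x y" using x y cg by (auto intro: coprime_divisors)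
    show "beta (n1*n2 div (x*y)) * beta (m1*m2 div (x*y)) * int (x*y) * (moebius (x*y))^2
       = (beta (n1 div x) * beta (m1 div x) * int x * (moebius x)^2) * (beta (n2 div y) * beta (m2 div y) * int y * (moebius y)^2)"
      unfolding e1 e2 beta_mult[OF cn] beta_mult[OF cm] moebius_sq_mult[OF cxy] by (simp add: ac_simps)
  qed
  also have "\<dots> = (\<Sum>x | x dvd g1. beta (n1 div x) * beta (m1 div x) * int x * (moebius x)^2) * (\<Sum>y | y dvd g2. beta (n2 div y) * beta (m2 div y) * int y * (moebius y)^2)"
    by (simp add: sum_product)
  also have "\<dots> = beta (n1*m1) * beta (n2*m2)" using IH by (simp add: g1_def g2_def)
  also have "\<dots> = beta (n1*n2 * (m1*m2))"
    using beta_mult[OF h(1)] by (simp add: ac_simps)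
  finally show "beta (n1*n2 * (m1*m2)) = (\<Sum>d | d dvd gcd (n1*n2) (m1*m2). beta (n1*n2 div d) * beta (m1*m2 div d) * int d * (moebius d)^2)"
    by simp
next
  fix p a b :: nat assume pr: "prime p"
  have "(\<Sum>d | d dvd gcd (p^a) (p^b). beta (p^a div d) * beta (p^b div d) * int d * (moebius d)^2)
      = (\<Sum>j\<le>min a b. beta (p^a div p^j) * beta (p^b div p^j) * int (p^j) * (moebius (p^j))^2)"
    unfolding gcd_pp by (rule divsum_pp[OF pr])
  also have "\<dots> = beta (p^(a+b))" using pp2[OF pr] by simp
  finally show "beta (p^a * p^b) = (\<Sum>d | d dvd gcd (p^a) (p^b). beta (p^a div d) * beta (p^b div d) * int d * (moebius d)^2)"
    by (simp add: power_add)
qed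

lemma beta_nonneg:
  fixes n :: nat
  assumes "n > 0"
  shows "0 \<le> beta n"
proof -
  have "0 \<le> beta n" if "n > 0" "(1::nat) > 0" for n
  proof (rule ind2[where P="\<lambda>n m. 0 \<le> beta n", OF _ _ that])
    fix n1 m1 n2 m2 :: nat
    assume h: "coprime (n1*m1) (n2*m2)" "0 \<le> beta n1" "0 \<le> beta n2"
    have "coprime n1 n2" using h(1) by auto
    then show "0 \<le> beta (n1*n2)" using h by (simp add: beta_mult)
  next
    fix p a b :: nat assume pr: "prime p"
    have "int p \<ge> 1" using prime_gt_0_nat[OF pr] by simp
    then have "int p ^ (a+1) \<ge> 1" by (rule one_le_power)
    moreover have "(-1::int)^a \<ge> -1" by (cases "even a") auto
    ultimately have "0 \<le> (int p + 1) * beta (p^a)" using beta_closed[OF pr, of a] by linarith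
    moreover have "int p + 1 > 0" by simp
    ultimately show "0 \<le> beta (p^a)" by (simp add: zero_le_mult_iff)
  qed
  then show ?thesis using assms by simp
qed

theorem mainTheorem12:
  fixes n m :: nat
  assumes "n \<ge> 1" and "m \<ge> 1"
  shows "beta n * beta m =
           (\<Sum>d | d dvd gcd n m. beta (n * m div d^2) * int d * liouville d)
       \<and> beta (n * m) =
           (\<Sum>d | d dvd gcd n m. beta (n div d) * beta (m div d) * int d * (moebius d)^2)
       \<and> beta (n * m) \<ge> beta n * beta m"
proof -
  have n: "n > 0" and m: "m > 0" using assms by auto
  note I1 = id1[OF n m] and I2 = id2[OF n m]
  let ?f = "\<lambda>d. beta (n div d) * beta (m div d) * int d * (moebius d)^2"
  have fin: "finite {d. d dvd gcd n m}" using n m by (intro finite_divisors_nat) simp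
  have a: "?f 1 \<le> sum ?f {d. d dvd gcd n m}"
  proof (rule member_le_sum)
    show "1 \<in> {d. d dvd gcd n m}" by simp
  next
    fix d assume "d \<in> {d. d dvd gcd n m} - {1}"
    then have d: "d dvd n" "d dvd m" by auto
    then have "n div d > 0" "m div d > 0" using n m
      by (auto simp: dvd_div_eq_0_iff dvd_imp_le intro!: Nat.gr0I elim!: dvdE)
    then show "0 \<le> ?f d" using beta_nonneg by simp
  qed (rule fin)
  have "(moebius 1)^2 = 1" by (simp add: moebius_def)
  then have b: "?f 1 = beta n * beta m" by simp
  have le: "beta n * beta m \<le> sum ?f {d. d dvd gcd n m}" using a b by linarith
  show ?thesis using I1 I2 le by simp
qed

end
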